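(* Consider the real ODE system $$\frac{dp}{dt}=p\,(pR(v_c)-1),\qquad \frac{dv_c}{dt}=-\frac{p}{4}(1+v_c^2),\qquad R(v)=\frac12\left(\frac1v-v\right).$$ Let $0<v_c(0)<1$ and $0<\rho<R(v_c(0))$, and suppose $p(0)>\frac{1}{R(v_c(0))-\rho}$. Then for all $t>0$ in the existence interval, $v_c(t)<v_c(0)$, $p(t)>\frac{1}{R(v_c(t))-\rho}$, and $p(t)\ge\frac{p(0)}{1-\rho p(0)t}$. Consequently $p(t)\to\infty$ at some finite time $t_c\le\frac{1}{\rho p(0)}$, and the quantities $N_2(t)^2=2\pi p(t)^2\left(\frac{1}{v_c(t)}+v_c(t)\right)$ and $N_0(t)=2|p(t)|\max\!\left(\frac{1}{v_c(t)},v_c(t)\right)$ tend to $\infty$ as $t\to t_c^-$.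
   Context: This system is the form, with dissipation coefficient normalized to $\nu=1$, of the pole-dynamics ODEs for the generalized Constantin–Lax–Majda equation with $a=1/2$, $\sigma=0$, written in the variable $p=\omega_{-2,i}/(v_c(1-v_c^2))$. The quantities $N_2$ and $N_0$ equal the $L^2(-\pi,\pi)$ norm and the Wiener norm, respectively, of the associated periodic solution $\omega(\cdot,t)$. *)

theory Defs
  imports Complex_Main "HOL-Library.Extended_Real"
begin

definition R :: "real \<Rightarrow> real" where
  "R v = (1/v - v) / 2"

definition tdom :: "ereal \<Rightarrow> real set" where
  "tdom T = {t. 0 \<le> t \<and> ereal t < T}"

definition is_sol :: "(real \<Rightarrow> real) \<Rightarrow> (real \<Rightarrow> real) \<Rightarrow> ereal \<Rightarrow> bool" where
  "is_sol p v T \<longleftrightarrow> 0 < T \<and>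
     (\<forall>t\<in>tdom T. v t \<noteq> 0 \<and>
        (p has_real_derivative (p t * (p t * R (v t) - 1))) (at t within tdom T) \<and>
        (v has_real_derivative (- (p t / 4) * (1 + (v t)^2))) (at t within tdom T))"

definition is_maximal_sol :: "(real \<Rightarrow> real) \<Rightarrow> (real \<Rightarrow> real) \<Rightarrow> ereal \<Rightarrow> bool" where
  "is_maximal_sol p v T \<longleftrightarrow> is_sol p v T \<and>
     (\<forall>p' v' T'. is_sol p' v' T' \<and> (\<forall>t\<in>tdom T. p' t = p t \<and> v' t = v t) \<longrightarrow> T' \<le> T)"

definition N2sq :: "real \<Rightarrow> real \<Rightarrow> real" where
  "N2sq p v = 2 * pi * p^2 * (1/v + v)"

definition N0 :: "real \<Rightarrow> real \<Rightarrow> real" where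
  "N0 p v = 2 * \<bar>p\<bar> * max (1/v) v"

end

theory Submission
  imports Defs "HOL-Analysis.Analysis"
begin

lemma ode_inv:
  fixes g :: "real \<Rightarrow> real" and a \<delta> :: real
  assumes d: "\<delta> > 0" and cg: "continuous_on {a-\<delta>..a+\<delta>} g"
    and gp: "\<And>x. x \<in> {a-\<delta>..a+\<delta>} \<Longrightarrow> g x > 0"
  shows "\<exists>\<Phi> \<psi> A B. A < 0 \<and> 0 < B \<and> \<Phi> a = 0 \<and> \<Phi> (a - \<delta>) = A \<and> \<Phi> (a + \<delta>) = B \<and>
     continuous_on {a-\<delta>..a+\<delta>} \<Phi> \<and>
     (\<forall>x\<in>{a-\<delta><..<a+\<delta>}. (\<Phi> has_real_derivative inverse (g x)) (at x)) \<and>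
     (\<forall>x\<in>{a-\<delta>..a+\<delta>}. \<forall>y\<in>{a-\<delta>..a+\<delta>}. x < y \<longrightarrow> \<Phi> x < \<Phi> y) \<and>
     (\<forall>s\<in>{A<..<B}. \<psi> s \<in> {a-\<delta><..<a+\<delta>} \<and> \<Phi> (\<psi> s) = s \<and>
          (\<psi> has_real_derivative g (\<psi> s)) (at s))"
proof -
  define I where "I = {a-\<delta>..a+\<delta>}"
  define h where "h = (\<lambda>u. inverse (g u))"
  have ch: "continuous_on I h" unfolding h_def I_def
    using cg gp by (intro continuous_on_inverse) (auto simp: less_imp_neq[symmetric])
  define \<Phi> where "\<Phi> x = integral {a-\<delta>..x} h - integral {a-\<delta>..a} h" for x
  have derw: "(\<Phi> has_real_derivative h x) (at x within I)" if "x \<in> I" for x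
    unfolding \<Phi>_def I_def
    using integral_has_real_derivative[OF ch[unfolded I_def] that[unfolded I_def]]
    by (auto intro!: derivative_eq_intros)
  have cPhi: "continuous_on I \<Phi>"
    using derw by (meson DERIV_continuous continuous_on_eq_continuous_within)
  have dera: "(\<Phi> has_real_derivative h x) (at x)" if "x \<in> {a-\<delta><..<a+\<delta>}" for x
  proof -
    have "at x within I = at x" unfolding I_def using that by (intro at_within_Icc_at) auto
    then show ?thesis using derw[of x] that unfolding I_def by auto
  qed
  have hpos: "h x > 0" if "x \<in> I" for x using gp that unfolding h_def I_def by auto
  have mono: "\<Phi> x < \<Phi> y" if "x \<in> I" "y \<in> I" "x < y" for x y
  proof (rule DERIV_pos_imp_increasing_open[OF that(3)])
    fix z assume "x < z" "z < y"
    then show "\<exists>y. DERIV \<Phi> z :> y \<and> 0 < y" using that dera hpos unfolding I_def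
      by (intro exI[of _ "h z"]) auto
  next
    show "continuous_on {x..y} \<Phi>" using that unfolding I_def
      by (intro continuous_on_subset[OF cPhi]) (auto simp: I_def)
  qed
  have Pa: "\<Phi> a = 0" unfolding \<Phi>_def by simp
  define A where "A = \<Phi> (a - \<delta>)"
  define B where "B = \<Phi> (a + \<delta>)"
  have AB: "A < 0" "0 < B" unfolding A_def B_def using mono[of "a-\<delta>" a] mono[of a "a+\<delta>"] d Pa
    unfolding I_def by auto
  have ex: "\<exists>x. x\<in>{a-\<delta><..<a+\<delta>} \<and> \<Phi> x = s" if "s \<in> {A<..<B}" for s
  proof -
    have "\<exists>x\<ge>a-\<delta>. x \<le> a+\<delta> \<and> \<Phi> x = s"
      using that d cPhi unfolding A_def B_def I_def
      by (intro IVT') auto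
    then obtain x where x: "a-\<delta> \<le> x" "x \<le> a+\<delta>" "\<Phi> x = s" by blast
    then have "x \<noteq> a-\<delta>" "x \<noteq> a+\<delta>" using that unfolding A_def B_def by auto
    then show ?thesis using x by (intro exI[of _ x]) auto
  qed
  define \<psi> where "\<psi> s = (SOME x. x\<in>{a-\<delta><..<a+\<delta>} \<and> \<Phi> x = s)" for s
  have psi: "\<psi> s \<in> {a-\<delta><..<a+\<delta>} \<and> \<Phi> (\<psi> s) = s" if "s \<in> {A<..<B}" for s
    unfolding \<psi>_def using someI_ex[OF ex[OF that]] by blast
  have inj: "x = y" if "x \<in> I" "y \<in> I" "\<Phi> x = \<Phi> y" for x y
    using mono[of x y] mono[of y x] that by (cases x y rule: linorder_cases) auto
  have psiPhi: "\<psi> (\<Phi> x) = x" if "x \<in> {a-\<delta><..<a+\<delta>}" for x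
  proof -
    have "\<Phi> x \<in> {A<..<B}" unfolding A_def B_def using that mono[of "a-\<delta>" x] mono[of x "a+\<delta>"]
      unfolding I_def by auto
    from psi[OF this] show ?thesis using inj[of "\<psi> (\<Phi> x)" x] that unfolding I_def by auto
  qed
  have dpsi: "(\<psi> has_real_derivative g (\<psi> s)) (at s)" if s: "s \<in> {A<..<B}" for s
  proof -
    from psi[OF s] have ps: "\<psi> s \<in> {a-\<delta><..<a+\<delta>}" "\<Phi> (\<psi> s) = s" by auto
    define e where "e = min (\<psi> s - (a-\<delta>)) ((a+\<delta>) - \<psi> s) / 2"
    have e: "e > 0" using ps unfolding e_def by auto
    have cont: "isCont \<psi> s"
    proof -
      have "isCont \<psi> (\<Phi> (\<psi> s))"
      proof (rule isCont_inverse_function[where f=\<Phi> and g=\<psi> and x="\<psi> s", OF e])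
        fix z assume z: "\<bar>z - \<psi> s\<bar> \<le> e"
        then have zz: "z \<in> {a-\<delta><..<a+\<delta>}" using ps e unfolding e_def by (auto simp: abs_if split: if_splits)
        show "\<psi> (\<Phi> z) = z" using psiPhi[OF zz] .
        show "isCont \<Phi> z" using dera[OF zz] by (rule DERIV_isCont)
      qed
      then show ?thesis using ps by simp
    qed
    have "(\<psi> has_real_derivative inverse (h (\<psi> s))) (at s)"
    proof (rule DERIV_inverse_function[where f=\<Phi> and a=A and b=B])
      show "DERIV \<Phi> (\<psi> s) :> h (\<psi> s)" using dera ps by auto
      show "h (\<psi> s) \<noteq> 0" using hpos[of "\<psi> s"] ps unfolding I_def by auto
      show "A < s" "s < B" using s by auto
      show "\<And>y. A < y \<Longrightarrow> y < B \<Longrightarrow> \<Phi> (\<psi> y) = y" using psi by auto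
      show "isCont \<psi> s" by (rule cont)
    qed
    then show ?thesis unfolding h_def by simp
  qed
  show ?thesis
    apply (rule exI[of _ \<Phi>], rule exI[of _ \<psi>], rule exI[of _ A], rule exI[of _ B])
    using AB Pa cPhi dera mono psi dpsi unfolding A_def B_def I_def h_def by auto
qed

definition K :: "real \<Rightarrow> real" where
  "K x = 2 * arctan x - 2 * x * (1 - x^2) / (1 + x^2)^2"

definition F :: "real \<Rightarrow> real \<Rightarrow> real" where
  "F c x = (c + K x) * (1 + x^2)^2 / (4 * x^2)"

lemma pos1: "(1 + (x::real)^2) > 0" by (simp add: add_pos_nonneg)

lemma DERIV_K: "(K has_real_derivative 16 * x^2 / (1 + x^2)^3) (at x)"
proof -
  have "(K has_real_derivative
     2 * inverse (1 + x^2) - ((2 * (1 - x^2) + 2 * x * (- (2 * x))) * (1 + x^2)^2 - 2 * x * (1 - x^2) * (2 * (1 + x^2) * (2 * x))) / ((1 + x^2)^2)^2) (at x)"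
    unfolding K_def using pos1[of x]
    by (auto intro!: derivative_eq_intros DERIV_arctan simp: power2_eq_square)
  moreover have "2 * inverse (1 + x^2) - ((2 * (1 - x^2) + 2 * x * (- (2 * x))) * (1 + x^2)^2 - 2 * x * (1 - x^2) * (2 * (1 + x^2) * (2 * x))) / ((1 + x^2)^2)^2
     = 16 * x^2 / (1 + x^2)^3"
  proof -
    obtain u where u: "u = 1 + x^2" by blast
    have u0: "u \<noteq> 0" using pos1[of x] u by linarith
    have N: "((2 * (1 - x^2) + 2 * x * (- (2 * x))) * (1 + x^2)^2 - 2 * x * (1 - x^2) * (2 * (1 + x^2) * (2 * x)))
       = 2*u^3 - 16*x^2*u" unfolding u by algebra
    show ?thesis unfolding N unfolding u[symmetric] using u0
      by (simp add: field_simps) algebra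
  qed
  ultimately show ?thesis by simp
qed

lemma DERIV_F: assumes x: "x \<noteq> 0"
  shows "(F c has_real_derivative -4 * (F c x * R x - 1) / (1 + x^2)) (at x)"
proof -
  obtain u where u: "1 + x^2 = u" by blast
  have u0: "u \<noteq> 0" using pos1[of x] u by linarith
  show ?thesis
  unfolding F_def
  apply (rule derivative_eq_intros DERIV_K refl)+
  using x apply simp
  apply (simp only: R_def F_def u)
  apply (simp add: field_simps u0 x)
  apply (simp only: u[symmetric])
  apply algebra
  done
qed

lemma K_cont: "continuous_on S K"
  using DERIV_K by (meson DERIV_isCont continuous_at_imp_continuous_on)

lemma K_nonneg: assumes "0 \<le> x" shows "0 \<le> K x"
proof -
  have "K 0 \<le> K x"
  proof (rule DERIV_nonneg_imp_increasing_open[OF assms])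
    fix y assume "0 < y" "y < x"
    show "\<exists>d. DERIV K y :> d \<and> 0 \<le> d"
      using DERIV_K[of y] pos1[of y] by (intro exI[of _ "16 * y^2 / (1 + y^2)^3"]) auto
  qed (rule K_cont)
  then show ?thesis by (simp add: K_def)
qed

lemma K_bound: assumes "0 < x" "x < 1" shows "K x < 8 * x^3 / (1 + x^2)^2"
proof -
  define N where "N y = 8 * y^3 / (1 + y^2)^2 - K y" for y
  have dN: "(N has_real_derivative (8 * y^2 - 8 * y^4) / (1 + y^2)^3) (at y)" for y
  proof -
    obtain u where u: "1 + y^2 = u" by blast
    have u0: "u \<noteq> 0" using pos1[of y] u by linarith
    have nz: "(1 + y^2)^2 \<noteq> 0" using u0 u by simp
    show ?thesis unfolding N_def
      apply (rule derivative_eq_intros DERIV_K refl nz)+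
      apply (simp only: u)
      apply (simp add: field_simps u0)
      apply (simp only: u[symmetric])
      apply algebra
      done
  qed
  have "N 0 < N x"
  proof (rule DERIV_pos_imp_increasing_open[OF assms(1)])
    fix y assume y: "0 < y" "y < x"
    have "y^2 < 1" using y assms by (simp add: power_less_one_iff) 
    then have "y^2 * y^2 < y^2 * 1" using y by (intro mult_strict_left_mono) auto
    moreover have "y^4 = y^2 * y^2" by algebra
    ultimately have "y^4 < y^2" by linarith
    then have "0 < 8 * y^2 - 8 * y^4" by linarith
    moreover have "0 < (1 + y^2)^3" using pos1[of y] by (rule zero_less_power)
    ultimately have "0 < (8 * y^2 - 8 * y^4) / (1 + y^2)^3" by (rule divide_pos_pos)
    then show "\<exists>d. DERIV N y :> d \<and> 0 < d" using dN by blast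
  next
    show "continuous_on {0..x} N" using dN by (meson DERIV_isCont continuous_at_imp_continuous_on)
  qed
  then show ?thesis unfolding N_def K_def by simp
qed

lemma H_alg: fixes P w :: real assumes w: "w \<noteq> 0" and u: "1 + w^2 = u" and u0: "u \<noteq> 0"
  shows "(((0 * P + P * (P * R w - 1) * 4) * w\<^sup>2 +
       real 2 * (- (P / 4) * (1 + w\<^sup>2) * w ^ (2 - Suc 0)) *
       (4 * P)) *
      (1 + w\<^sup>2)\<^sup>2 -
      4 * P * w\<^sup>2 *
      (real 2 *
       ((0 + real 2 * (- (P / 4) * (1 + w\<^sup>2) * w ^ (2 - Suc 0))) *
        (1 + w\<^sup>2) ^ (2 - Suc 0)))) /
     ((1 + w\<^sup>2)\<^sup>2 * (1 + w\<^sup>2)\<^sup>2) -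
     16 * w\<^sup>2 / (1 + w\<^sup>2) ^ 3 * (- (P / 4) * (1 + w\<^sup>2)) =  0"
  unfolding u R_def
  apply (simp add: field_simps u0 w)
  apply (simp only: u[symmetric])
  apply algebra
  done

lemma DERIV_H:
  fixes p v :: "real \<Rightarrow> real"
  assumes vt: "v t \<noteq> 0"
    and dp: "(p has_real_derivative p t * (p t * R (v t) - 1)) (at t)"
    and dv: "(v has_real_derivative - (p t / 4) * (1 + (v t)^2)) (at t)"
  shows "((\<lambda>s. 4 * p s * (v s)^2 / (1 + (v s)^2)^2 - K (v s)) has_real_derivative 0) (at t)"
proof -
  obtain u where u: "1 + (v t)^2 = u" by blast
  have u0: "u \<noteq> 0" using pos1[of "v t"] u by linarith
  have nz: "(1 + (v t)^2)^2 \<noteq> 0" using u0 u by simp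
  show ?thesis
  apply (rule derivative_eq_intros DERIV_chain2[OF DERIV_K dv] dp dv refl nz)+
  apply (rule H_alg[OF vt u u0])
  done
qed

lemma R_anti: assumes "0 < a" "a \<le> b" shows "R b \<le> R a"
proof -
  have "1/b \<le> 1/a" using assms by (simp add: frac_le)
  then show ?thesis unfolding R_def using assms by simp
qed

lemma tdom_iff: "t \<in> tdom T \<longleftrightarrow> 0 \<le> t \<and> ereal t < T" by (simp add: tdom_def)

lemma tdom_Icc: assumes "0 \<le> a" "b \<in> tdom T" shows "{a..b} \<subseteq> tdom T"
  using assms by (auto simp: tdom_def) (meson ereal_less_eq(3) le_less_trans)

lemma tdom_interior: assumes "0 < t" "ereal t < T" shows "at t within tdom T = at t"
proof (rule at_within_interior)
  show "t \<in> interior (tdom T)"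
  proof (cases T rule: ereal_cases)
    case (real r)
    have "{0<..<r} \<subseteq> tdom T" using real by (auto simp: tdom_def)
    moreover have "t \<in> {0<..<r}" using assms real by auto
    ultimately show ?thesis by (meson interiorI open_greaterThanLessThan)
  next
    case PInf
    have "{0<..} \<subseteq> tdom T" using PInf by (auto simp: tdom_def)
    moreover have "t \<in> {0<..}" using assms by auto
    ultimately show ?thesis by (meson interiorI open_greaterThan)
  next
    case MInf then show ?thesis using assms by simp
  qed
qed

locale sys =
  fixes p v :: "real \<Rightarrow> real" and T :: ereal and \<rho> :: real
  assumes sol: "is_maximal_sol p v T"
    and v0: "0 < v 0" "v 0 < 1"
    and rho: "0 < \<rho>" "\<rho> < R (v 0)"
    and p0: "p 0 > 1 / (R (v 0) - \<rho>)"
begin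

lemma issol: "is_sol p v T" using sol by (simp add: is_maximal_sol_def)

lemma T0: "0 < T" using issol by (simp add: is_sol_def)

lemma zero_in: "0 \<in> tdom T" using T0 by (simp add: tdom_def zero_ereal_def)

lemma D: assumes "t \<in> tdom T"
  shows "v t \<noteq> 0" "(p has_real_derivative (p t * (p t * R (v t) - 1))) (at t within tdom T)"
    "(v has_real_derivative (- (p t / 4) * (1 + (v t)^2))) (at t within tdom T)"
  using issol assms by (auto simp: is_sol_def)

lemma Dat: assumes "0 < t" "t \<in> tdom T"
  shows "(p has_real_derivative (p t * (p t * R (v t) - 1))) (at t)"
    "(v has_real_derivative (- (p t / 4) * (1 + (v t)^2))) (at t)"
  using D[OF assms(2)] tdom_interior[of t T] assms by (auto simp: tdom_def)

lemma cont_p: "continuous_on (tdom T) p"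
  using D(2) by (meson DERIV_continuous continuous_on_eq_continuous_within)

lemma cont_v: "continuous_on (tdom T) v"
  using D(3) by (meson DERIV_continuous continuous_on_eq_continuous_within)

lemma R0: "R (v 0) - \<rho> > 0" using rho by simp

lemma pp0: "p 0 > 0" using p0 R0 by (meson less_trans zero_less_divide_1_iff)

lemma E0: "R (v 0) - \<rho> - 1 / p 0 > 0"
proof -
  have "1 < p 0 * (R (v 0) - \<rho>)" using p0 R0 by (simp add: divide_less_eq mult.commute)
  then have "1 / p 0 < R (v 0) - \<rho>" using pp0 by (simp add: divide_less_eq mult.commute)
  then show ?thesis by simp
qed

definition good where "good s \<longleftrightarrow> 0 < v s \<and> 0 < p s \<and> 0 < R (v s) - \<rho> - 1 / p s"

lemma good0: "good 0" using v0 pp0 E0 by (simp add: good_def)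

lemma good_dp: assumes "good s" shows "0 < p s * (p s * R (v s) - 1)"
proof -
  have ps: "0 < p s" and e: "0 < R (v s) - \<rho> - 1 / p s" using assms by (auto simp: good_def)
  have "1 / p s < R (v s)" using e rho by linarith
  then have "1 < p s * R (v s)" using ps by (simp add: divide_less_eq mult.commute)
  then show ?thesis using ps by simp
qed

lemma good_dv: assumes "good s" shows "- (p s / 4) * (1 + (v s)^2) < 0"
  using assms pos1[of "v s"] by (simp add: good_def)

lemma mono_upto:
  assumes m: "0 < m" "m \<in> tdom T" and below: "\<And>s. 0 \<le> s \<Longrightarrow> s < m \<Longrightarrow> good s"
  shows "p 0 \<le> p m" "v m < v 0"
proof -
  have sub: "{0..m} \<subseteq> tdom T" using tdom_Icc m by auto
  have int: "s \<in> tdom T" if "0 < s" "s < m" for s using sub that by auto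
  show "p 0 \<le> p m"
  proof (rule DERIV_nonneg_imp_increasing_open[of 0 m p])
    fix s assume s: "0 < s" "s < m"
    show "\<exists>y. DERIV p s :> y \<and> 0 \<le> y"
      using Dat(1)[OF s(1) int[OF s]] good_dp[OF below[OF _ s(2)]] s by (intro exI) (auto intro: less_imp_le)
  qed (use m sub continuous_on_subset[OF cont_p] in auto)
  show "v m < v 0"
  proof (rule DERIV_neg_imp_decreasing_open[of 0 m v])
    fix s assume s: "0 < s" "s < m"
    show "\<exists>y. DERIV v s :> y \<and> y < 0"
      using Dat(2)[OF s(1) int[OF s]] good_dv[OF below[OF _ s(2)]] s by (intro exI) auto
  qed (use m sub continuous_on_subset[OF cont_v] in auto)
qed

lemma good_m:
  assumes m: "m \<in> tdom T" and below: "\<And>s. 0 \<le> s \<Longrightarrow> s < m \<Longrightarrow> good s"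
  shows "good m"
proof (cases "m = 0")
  case True then show ?thesis using good0 by simp
next
  case False
  then have m0: "0 < m" using m by (simp add: tdom_def)
  note mu = mono_upto[OF m0 m below]
  have sub: "{0..m} \<subseteq> tdom T" using tdom_Icc m by auto
  have "(v \<longlongrightarrow> v m) (at m within {0..m})"
    using continuous_on_subset[OF cont_v sub] m0
    by (simp add: continuous_on_eq_continuous_within continuous_within)
  then have lim: "(v \<longlongrightarrow> v m) (at_left m)" using at_within_Icc_at_left[OF m0] by simp
  have ev: "eventually (\<lambda>s. 0 \<le> v s) (at_left m)"
    using eventually_at_left_real[OF m0] by eventually_elim (use below in \<open>auto simp: good_def intro: less_imp_le\<close>)
  have "0 \<le> v m" by (rule tendsto_lowerbound[OF lim ev]) simp
  then have vm: "0 < v m" using D(1)[OF m] by linarith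
  have pm: "0 < p m" using mu pp0 by linarith
  have "R (v 0) \<le> R (v m)" using R_anti[OF vm] mu by simp
  moreover have "1 / p m \<le> 1 / p 0" using pp0 mu by (simp add: frac_le)
  ultimately have "0 < R (v m) - \<rho> - 1 / p m" using E0 by linarith
  then show ?thesis using vm pm by (simp add: good_def)
qed

lemma good_all: assumes t1: "t1 \<in> tdom T" shows "good t1"
proof (rule ccontr)
  assume bad: "\<not> good t1"
  define B where "B = {s. 0 \<le> s \<and> s \<le> t1 \<and> \<not> good s}"
  define m where "m = Inf B"
  have t1B: "t1 \<in> B" using bad t1 by (simp add: B_def tdom_def)
  have bdd: "bdd_below B" unfolding B_def by (rule bdd_belowI[of _ 0]) auto
  have mt1: "m \<le> t1" unfolding m_def using t1B bdd by (rule cInf_lower)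
  have m0: "0 \<le> m" unfolding m_def using t1B by (intro cInf_greatest) (auto simp: B_def)
  have mT: "m \<in> tdom T" using tdom_Icc[OF m0 t1] mt1 m0 by auto
  have below: "good s" if "0 \<le> s" "s < m" for s
  proof (rule ccontr)
    assume "\<not> good s"
    then have "s \<in> B" using that mt1 by (simp add: B_def)
    then have "m \<le> s" unfolding m_def using bdd by (intro cInf_lower)
    then show False using that by simp
  qed
  have gm: "good m" by (rule good_m[OF mT below])
  have lv: "(v \<longlongrightarrow> v m) (at m within tdom T)"
    using cont_v mT by (simp add: continuous_on_eq_continuous_within continuous_within)
  have lp: "(p \<longlongrightarrow> p m) (at m within tdom T)"
    using cont_p mT by (simp add: continuous_on_eq_continuous_within continuous_within)
  have vm: "v m \<noteq> 0" and pm: "p m \<noteq> 0" using gm by (auto simp: good_def)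
  have lE: "((\<lambda>s. R (v s) - \<rho> - 1 / p s) \<longlongrightarrow> R (v m) - \<rho> - 1 / p m) (at m within tdom T)"
    unfolding R_def using vm pm by (intro tendsto_intros lv lp) auto
  have "eventually (\<lambda>s. 0 < v s) (at m within tdom T)"
    using gm lv by (intro order_tendstoD(1)[OF lv]) (simp add: good_def)
  moreover have "eventually (\<lambda>s. 0 < p s) (at m within tdom T)"
    using gm lp by (intro order_tendstoD(1)[OF lp]) (simp add: good_def)
  moreover have "eventually (\<lambda>s. 0 < R (v s) - \<rho> - 1 / p s) (at m within tdom T)"
    using gm by (intro order_tendstoD(1)[OF lE]) (simp add: good_def)
  ultimately have "eventually good (at m within tdom T)"
    by eventually_elim (simp add: good_def)
  then obtain d where d: "d > 0" "\<And>s. s \<in> tdom T \<Longrightarrow> s \<noteq> m \<Longrightarrow> dist s m < d \<Longrightarrow> good s"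
    by (auto simp: eventually_at)
  have "Inf B < m + d" using d(1) unfolding m_def by simp
  then obtain b where b: "b \<in> B" "b < m + d" using t1B bdd cInf_less_iff[of B "m + d"] by blast
  have "m \<le> b" unfolding m_def using b(1) bdd by (rule cInf_lower)
  have "b \<in> tdom T" using b(1) tdom_Icc[OF _ t1, of 0] by (auto simp: B_def)
  have "good b"
  proof (cases "b = m")
    case True then show ?thesis using gm by simp
  next
    case False
    then show ?thesis using d(2)[OF \<open>b \<in> tdom T\<close> False] b \<open>m \<le> b\<close> by (simp add: dist_real_def)
  qed
  then show False using b(1) by (simp add: B_def)
qed

lemma pos: assumes "t \<in> tdom T"
  shows "0 < v t" "0 < p t" "1 / p t < R (v t) - \<rho>"
  using good_all[OF assms] by (auto simp: good_def)

lemma phi_less: assumes t: "0 < t" "t \<in> tdom T" shows "\<rho> * t + 1 / p t < 1 / p 0"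
proof -
  have sub: "{0..t} \<subseteq> tdom T" using tdom_Icc t by auto
  have "\<rho> * t + 1 / p t < \<rho> * 0 + 1 / p 0"
  proof (rule DERIV_neg_imp_decreasing_open[of 0 t "\<lambda>s. \<rho> * s + 1 / p s"])
    fix s assume s: "0 < s" "s < t"
    have sT: "s \<in> tdom T" using sub s by auto
    note ps = pos[OF sT]
    have d1: "DERIV (\<lambda>s. inverse (p s)) s :> - ((p s * (p s * R (v s) - 1)) * inverse (p s ^ Suc (Suc 0)))"
      by (rule DERIV_inverse_fun[OF Dat(1)[OF s(1) sT]]) (use ps(2) in simp)
    have d2: "DERIV (\<lambda>s. \<rho> * s) s :> \<rho>" using DERIV_cmult_Id[of \<rho> s] by simp
    have "DERIV (\<lambda>s. \<rho> * s + inverse (p s)) s :> \<rho> + - ((p s * (p s * R (v s) - 1)) * inverse (p s ^ Suc (Suc 0)))"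
      by (rule DERIV_add[OF d2 d1])
    moreover have "\<rho> + - ((p s * (p s * R (v s) - 1)) * inverse (p s ^ Suc (Suc 0))) = \<rho> - (p s * (p s * R (v s) - 1)) / (p s)^2"
      by (simp add: divide_inverse power2_eq_square)
    moreover have "(\<lambda>s. \<rho> * s + inverse (p s)) = (\<lambda>s. \<rho> * s + 1 / p s)" by (simp add: divide_inverse)
    ultimately have "((\<lambda>s. \<rho> * s + 1 / p s) has_real_derivative \<rho> - (p s * (p s * R (v s) - 1)) / (p s)^2) (at s)"
      by simp
    moreover have "\<rho> - (p s * (p s * R (v s) - 1)) / (p s)^2 < 0"
    proof -
      have "(p s * (p s * R (v s) - 1)) / (p s)^2 = R (v s) - 1 / p s"
        using ps(2) by (simp add: field_simps power2_eq_square)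
      then show ?thesis using ps(3) by simp
    qed
    ultimately show "\<exists>y. DERIV (\<lambda>s. \<rho> * s + 1 / p s) s :> y \<and> y < 0" by blast
  next
    have "continuous_on {0..t} p" using continuous_on_subset[OF cont_p sub] .
    moreover have "\<forall>s\<in>{0..t}. p s \<noteq> 0" using pos(2) sub by (metis less_irrefl subsetD)
    ultimately show "continuous_on {0..t} (\<lambda>s. \<rho> * s + 1 / p s)"
      by (intro continuous_intros) auto
  qed (use t in auto)
  then show ?thesis by simp
qed

lemma part1: assumes t: "0 < t" "ereal t < T"
  shows "v t < v 0 \<and> p t > 1 / (R (v t) - \<rho>) \<and> p t \<ge> p 0 / (1 - \<rho> * p 0 * t)"
proof -
  have tT: "t \<in> tdom T" using t by (simp add: tdom_def)
  note ps = pos[OF tT]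
  have below: "good s" if "0 \<le> s" "s < t" for s
  proof -
    have "s \<in> {s..t}" using that by auto
    then show ?thesis using good_all tdom_Icc[OF that(1) tT] by blast
  qed
  have A: "v t < v 0" using mono_upto(2)[OF t(1) tT below] by auto
  have "0 < R (v t) - \<rho>" using ps by (meson divide_pos_pos less_trans zero_less_one)
  have "1 < p t * (R (v t) - \<rho>)" using ps(2) ps(3) by (simp add: divide_less_eq mult.commute)
  then have B: "1 / (R (v t) - \<rho>) < p t" using \<open>0 < R (v t) - \<rho>\<close> by (simp add: divide_less_eq)
  have ph: "\<rho> * t + 1 / p t < 1 / p 0" by (rule phi_less[OF t(1) tT])
  define a where "a = 1 / p t"
  have a0: "0 < a" using ps(2) by (simp add: a_def)
  have "1 / p 0 - \<rho> * t > a" using ph by (simp add: a_def)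
  then have "1 - \<rho> * p 0 * t > p 0 * a" using pp0
    by (simp add: field_simps)
  have den: "1 - \<rho> * p 0 * t = p 0 * (1 / p 0 - \<rho> * t)" using pp0 by (simp add: field_simps)
  have "p 0 / (1 - \<rho> * p 0 * t) = 1 / (1 / p 0 - \<rho> * t)" unfolding den using pp0 by simp
  also have "\<dots> \<le> 1 / a" using a0 \<open>1 / p 0 - \<rho> * t > a\<close> by (intro divide_left_mono) auto
  also have "\<dots> = p t" by (simp add: a_def)
  finally show ?thesis using A B by simp
qed

lemma Tbound: "T \<le> ereal (1 / (\<rho> * p 0))"
proof (rule ccontr)
  assume "\<not> T \<le> ereal (1 / (\<rho> * p 0))"
  then have lt: "ereal (1 / (\<rho> * p 0)) < T" by simp
  define ts where "ts = 1 / (\<rho> * p 0)"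
  have ts0: "0 < ts" using rho pp0 by (simp add: ts_def)
  have tsT: "ts \<in> tdom T" using lt ts0 by (simp add: ts_def tdom_def)
  have "\<rho> * ts + 1 / p ts < 1 / p 0" by (rule phi_less[OF ts0 tsT])
  moreover have "\<rho> * ts = 1 / p 0" using rho pp0 by (simp add: ts_def)
  moreover have "0 < 1 / p ts" using pos(2)[OF tsT] by simp
  ultimately show False by simp
qed

end

definition Hf :: "real \<Rightarrow> real \<Rightarrow> real" where
  "Hf P w = 4 * P * w^2 / (1 + w^2)^2 - K w"

context sys begin

definition tc where "tc = real_of_ereal T"

lemma T_eq: "T = ereal tc" and tc_pos: "0 < tc" and tc_le: "tc \<le> 1 / (\<rho> * p 0)"
proof -
  have "T = ereal tc \<and> 0 < tc \<and> tc \<le> 1 / (\<rho> * p 0)"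
  proof (cases T rule: ereal_cases)
    case (real r)
    then show ?thesis using T0 Tbound unfolding tc_def by simp
  next
    case PInf then show ?thesis using Tbound by simp
  next
    case MInf then show ?thesis using T0 by simp
  qed
  then show "T = ereal tc" "0 < tc" "tc \<le> 1 / (\<rho> * p 0)" by auto
qed

lemma tdom_eq: "tdom T = {0..<tc}"
proof -
  have "tdom T = tdom (ereal tc)" using T_eq by (rule arg_cong)
  also have "\<dots> = {0..<tc}" by (auto simp: tdom_def)
  finally show ?thesis .
qed

lemma mono_gen: assumes st: "0 \<le> s" "s < t" "t < tc"
  shows "p s < p t" "v t < v s"
proof -
  have tT: "t \<in> tdom T" using st by (simp add: tdom_eq)
  have sub: "{s..t} \<subseteq> tdom T" using tdom_Icc[OF st(1) tT] .
  have int: "x \<in> tdom T" "0 < x" if "s < x" "x < t" for x using sub that st by auto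
  show "p s < p t"
  proof (rule DERIV_pos_imp_increasing_open[of s t p])
    fix x assume x: "s < x" "x < t"
    show "\<exists>y. DERIV p x :> y \<and> 0 < y"
      using Dat(1)[OF int(2)[OF x] int(1)[OF x]] good_dp[OF good_all[OF int(1)[OF x]]] by blast
  qed (use st sub continuous_on_subset[OF cont_p] in auto)
  show "v t < v s"
  proof (rule DERIV_neg_imp_decreasing_open[of s t v])
    fix x assume x: "s < x" "x < t"
    show "\<exists>y. DERIV v x :> y \<and> y < 0"
      using Dat(2)[OF int(2)[OF x] int(1)[OF x]] good_dv[OF good_all[OF int(1)[OF x]]] by blast
  qed (use st sub continuous_on_subset[OF cont_v] in auto)
qed

definition C0 where "C0 = Hf (p 0) (v 0)"

lemma conserved: assumes t: "t \<in> tdom T" shows "Hf (p t) (v t) = C0"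
proof (cases "t = 0")
  case True then show ?thesis by (simp add: C0_def)
next
  case False
  then have t0: "0 < t" using t by (simp add: tdom_def)
  have sub: "{0..t} \<subseteq> tdom T" using tdom_Icc[OF _ t] by auto
  have "(\<lambda>s. Hf (p s) (v s)) t = (\<lambda>s. Hf (p s) (v s)) 0"
  proof (rule DERIV_isconst_end[OF t0])
    have "continuous_on {0..t} p" "continuous_on {0..t} v"
      using continuous_on_subset[OF cont_p sub] continuous_on_subset[OF cont_v sub] by auto
    moreover have "continuous_on {0..t} (\<lambda>s. K (v s))"
      by (rule continuous_on_compose2[OF K_cont[of UNIV] \<open>continuous_on {0..t} v\<close>]) auto
    moreover have "\<forall>s\<in>{0..t}. (1 + (v s)^2)^2 \<noteq> 0" using pos1 by (metis less_irrefl power_not_zero)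
    ultimately show "continuous_on {0..t} (\<lambda>s. Hf (p s) (v s))"
      unfolding Hf_def by (intro continuous_intros) auto
  next
    fix x assume x: "0 < x" "x < t"
    have xT: "x \<in> tdom T" using sub x by auto
    show "DERIV (\<lambda>s. Hf (p s) (v s)) x :> 0"
      unfolding Hf_def by (rule DERIV_H[OF D(1)[OF xT] Dat[OF x(1) xT]])
  qed
  then show ?thesis by (simp add: C0_def)
qed

lemma C0_pos: "0 < C0"
proof -
  have "1 / p 0 < R (v 0)" using E0 rho by linarith
  moreover have "R (v 0) = 1 / (2 * v 0) - v 0 / 2" unfolding R_def by simp
  ultimately have lt: "1 / p 0 < 1 / (2 * v 0)" using v0 by linarith
  have "2 * v 0 < p 0"
  proof (rule ccontr)
    assume "\<not> 2 * v 0 < p 0"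
    then have "1 / (2 * v 0) \<le> 1 / p 0" using pp0 v0 by (intro divide_left_mono) auto
    then show False using lt by simp
  qed
  then have "8 * v 0 ^ 3 < 4 * p 0 * (v 0)^2"
    using v0 by (simp add: power3_eq_cube power2_eq_square)
  then have "8 * v 0 ^ 3 / (1 + (v 0)^2)^2 < 4 * p 0 * (v 0)^2 / (1 + (v 0)^2)^2"
    using pos1[of "v 0"] by (intro divide_strict_right_mono) auto
  then show ?thesis using K_bound[OF v0] by (simp add: C0_def Hf_def)
qed

lemma pF: assumes t: "t \<in> tdom T" shows "p t = F C0 (v t)"
proof -
  have vt: "v t \<noteq> 0" using D(1)[OF t] .
  have u: "(1 + (v t)^2)^2 \<noteq> 0" using pos1[of "v t"] by simp
  have "4 * p t * (v t)^2 / (1 + (v t)^2)^2 = C0 + K (v t)" using conserved[OF t] by (simp add: Hf_def)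
  then have "4 * p t * (v t)^2 = (C0 + K (v t)) * (1 + (v t)^2)^2" using u by (simp add: divide_eq_eq)
  then show ?thesis unfolding F_def using vt by (simp add: eq_divide_eq)
qed

definition va where "va = Inf (v ` {0..<tc})"

lemma va_le: assumes "s \<in> {0..<tc}" shows "va \<le> v s"
proof -
  have "bdd_below (v ` {0..<tc})"
    by (rule bdd_belowI[of _ 0]) (use pos(1) tdom_eq in \<open>auto intro: less_imp_le\<close>)
  then show ?thesis unfolding va_def using assms by (intro cInf_lower) auto
qed

lemma va_nonneg: "0 \<le> va"
  unfolding va_def using tc_pos pos(1) tdom_eq
  by (intro cInf_greatest) (auto intro: less_imp_le)

lemma va_lt: assumes s: "s \<in> {0..<tc}" shows "va < v s"
proof -
  define s' where "s' = (s + tc) / 2"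
  have "s < s'" "s' < tc" using s by (auto simp: s'_def)
  then have "v s' < v s" using mono_gen(2)[of s s'] s by auto
  moreover have "va \<le> v s'" using va_le \<open>s < s'\<close> \<open>s' < tc\<close> s by auto
  ultimately show ?thesis by simp
qed

lemma lim_v: "(v \<longlongrightarrow> va) (at_left tc)"
proof (rule order_tendstoI)
  fix y assume y: "y < va"
  show "eventually (\<lambda>s. y < v s) (at_left tc)"
    using eventually_at_left_real[OF tc_pos]
  proof eventually_elim
    case (elim s)
    then have "s \<in> {0..<tc}" by auto
    then show ?case using va_le[of s] y by linarith
  qed
next
  fix y assume y: "va < y"
  have ne: "v ` {0..<tc} \<noteq> {}" using tc_pos by auto
  have bdd: "bdd_below (v ` {0..<tc})"
    by (rule bdd_belowI[of _ 0]) (use pos(1) tdom_eq in \<open>auto intro: less_imp_le\<close>)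
  obtain s0 where s0: "s0 \<in> {0..<tc}" "v s0 < y"
    using cInf_less_iff[OF ne bdd, of y] y unfolding va_def by auto
  show "eventually (\<lambda>s. v s < y) (at_left tc)"
    using eventually_at_left_real[of s0 tc] s0
  proof -
    have "eventually (\<lambda>s. s \<in> {s0<..<tc}) (at_left tc)" using eventually_at_left_real[of s0 tc] s0 by auto
    then show ?thesis
      by eventually_elim (use s0 mono_gen(2) in \<open>fastforce\<close>)
  qed
qed

lemma not_false_at_left: assumes "eventually (\<lambda>s. False) (at_left tc)" shows False
  using assms by (simp add: eventually_False)

lemma case0: assumes L: "\<And>t. t \<in> {0..<tc} \<Longrightarrow> p t \<le> L" and a0: "va = 0" shows False
proof -
  have L0: "0 < L" using L[of 0] pp0 tc_pos by auto
  have lb: "C0 / 4 \<le> p s * (v s)^2" if s: "s \<in> {0..<tc}" for s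
  proof -
    have sT: "s \<in> tdom T" using s tdom_eq by simp
    have vs: "v s \<noteq> 0" using D(1)[OF sT] .
    have "p s * (v s)^2 = (C0 + K (v s)) * (1 + (v s)^2)^2 / 4"
      using pF[OF sT] vs unfolding F_def by (simp add: field_simps)
    moreover have "C0 \<le> (C0 + K (v s)) * (1 + (v s)^2)^2"
    proof -
      have k: "0 \<le> K (v s)" using K_nonneg pos(1)[OF sT] by (simp add: less_imp_le)
      have "1 \<le> (1 + (v s)^2)^2" by (rule one_le_power) simp
      then have "C0 * 1 \<le> C0 * (1 + (v s)^2)^2" using C0_pos by (intro mult_left_mono) auto
      also have "\<dots> \<le> (C0 + K (v s)) * (1 + (v s)^2)^2" using k by (intro mult_right_mono) auto
      finally show ?thesis by simp
    qed
    ultimately show ?thesis by simp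
  qed
  have lim2: "((\<lambda>s. (v s)^2) \<longlongrightarrow> 0) (at_left tc)"
    using tendsto_power[OF lim_v, of 2] a0 by simp
  have pos4: "0 < C0 / (4 * L)" using C0_pos L0 by simp
  have "eventually (\<lambda>s. (v s)^2 < C0 / (4 * L)) (at_left tc)"
    using order_tendstoD(2)[OF lim2 pos4] .
  moreover have "eventually (\<lambda>s. s \<in> {0<..<tc}) (at_left tc)" using eventually_at_left_real[OF tc_pos] .
  ultimately have "eventually (\<lambda>s. False) (at_left tc)"
  proof eventually_elim
    case (elim s)
    then have s: "s \<in> {0..<tc}" by auto
    have "C0 / 4 \<le> p s * (v s)^2" using lb[OF s] .
    also have "\<dots> \<le> L * (v s)^2" using L[OF s] by (intro mult_right_mono) auto
    finally have "C0 / (4 * L) \<le> (v s)^2" using L0 by (simp add: field_simps)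
    then show False using elim by simp
  qed
  then show False by (rule not_false_at_left)
qed

lemma va_pos_False: assumes apos: "0 < va" shows False
proof -
  define \<delta> where "\<delta> = va / 2"
  have d0: "0 < \<delta>" using apos by (simp add: \<delta>_def)
  define g where "g x = F C0 x * (1 + x^2) / 4" for x
  have gpos: "0 < g x" if "0 < x" for x
  proof -
    have "0 < C0 + K x" using C0_pos K_nonneg[of x] that by simp
    then have "0 < F C0 x" unfolding F_def using that pos1[of x] by simp
    then show ?thesis unfolding g_def using pos1[of x] by simp
  qed
  have Ipos: "0 < x" if "x \<in> {va-\<delta>..va+\<delta>}" for x using that apos by (simp add: \<delta>_def)
  have gcont: "continuous_on {va-\<delta>..va+\<delta>} g"
  proof -
    have "continuous_on {va-\<delta>..va+\<delta>} K" by (rule K_cont)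
    moreover have "\<forall>x\<in>{va-\<delta>..va+\<delta>}. 4 * x^2 \<noteq> 0" using Ipos by fastforce
    ultimately show ?thesis unfolding g_def F_def by (intro continuous_intros) auto
  qed
  obtain \<Phi> \<psi> A B where AB: "A < 0" "0 < B" and Pa: "\<Phi> va = 0"
    and PA: "\<Phi> (va - \<delta>) = A" and PB: "\<Phi> (va + \<delta>) = B"
    and cPhi: "continuous_on {va-\<delta>..va+\<delta>} \<Phi>"
    and dPhi: "\<And>x. x\<in>{va-\<delta><..<va+\<delta>} \<Longrightarrow> (\<Phi> has_real_derivative inverse (g x)) (at x)"
    and mPhi: "\<And>x y. x\<in>{va-\<delta>..va+\<delta>} \<Longrightarrow> y\<in>{va-\<delta>..va+\<delta>} \<Longrightarrow> x < y \<Longrightarrow> \<Phi> x < \<Phi> y"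
    and psi: "\<And>s. s\<in>{A<..<B} \<Longrightarrow> \<psi> s \<in> {va-\<delta><..<va+\<delta>} \<and> \<Phi> (\<psi> s) = s \<and>
          (\<psi> has_real_derivative g (\<psi> s)) (at s)"
    using ode_inv[OF d0 gcont gpos[OF Ipos]] by metis
  have injPhi: "x = y" if "x\<in>{va-\<delta>..va+\<delta>}" "y\<in>{va-\<delta>..va+\<delta>}" "\<Phi> x = \<Phi> y" for x y
    using mPhi[of x y] mPhi[of y x] that by (cases x y rule: linorder_cases) auto
  have "eventually (\<lambda>s. v s < va + \<delta>) (at_left tc)"
    using order_tendstoD(2)[OF lim_v] d0 by simp
  then obtain b where b: "b < tc" "\<And>y. b < y \<Longrightarrow> y < tc \<Longrightarrow> v y < va + \<delta>"
    using eventually_at_left[of 0 tc] tc_pos by auto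
  define t1 where "t1 = (max b 0 + tc) / 2"
  have t1: "0 < t1" "t1 < tc" "b < t1" using b(1) tc_pos by (auto simp: t1_def)
  have vin: "va < v s \<and> v s < va + \<delta>" if "t1 \<le> s" "s < tc" for s
    using va_lt[of s] b(2)[of s] that t1 by auto
  have sT: "s \<in> tdom T" if "t1 \<le> s" "s < tc" for s using that t1 by (simp add: tdom_eq)
  have const: "\<Phi> (v s) + s = \<Phi> (v t1) + t1" if s: "t1 \<le> s" "s < tc" for s
  proof (cases "s = t1")
    case True then show ?thesis by simp
  next
    case False
    then have s1: "t1 < s" using s by simp
    show ?thesis
    proof (rule DERIV_isconst_end[OF s1, of "\<lambda>s. \<Phi> (v s) + s"])
      have sub: "{t1..s} \<subseteq> tdom T" using sT s by auto
      have "continuous_on {t1..s} (\<lambda>s. \<Phi> (v s))"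
        by (rule continuous_on_compose2[OF cPhi continuous_on_subset[OF cont_v sub]])
          (use vin s in \<open>fastforce simp: \<delta>_def\<close>)
      then show "continuous_on {t1..s} (\<lambda>s. \<Phi> (v s) + s)" by (intro continuous_intros)
    next
      fix x assume x: "t1 < x" "x < s"
      have xT: "x \<in> tdom T" using sT x s by auto
      have x0: "0 < x" using x t1 by simp
      have vx: "v x \<in> {va-\<delta><..<va+\<delta>}" using vin[of x] x s d0 by auto
      have d1: "((\<lambda>s. \<Phi> (v s)) has_real_derivative inverse (g (v x)) * (- (p x / 4) * (1 + (v x)^2))) (at x)"
        by (rule DERIV_chain2[OF dPhi[OF vx] Dat(2)[OF x0 xT]])
      have gv: "g (v x) = p x * (1 + (v x)^2) / 4" unfolding g_def using pF[OF xT] by simp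
      have "p x * (1 + (v x)^2) \<noteq> 0" using pos(2)[OF xT] pos1[of "v x"] by simp
      then have "inverse (g (v x)) * (- (p x / 4) * (1 + (v x)^2)) = -1" unfolding gv
        by (simp add: field_simps)
      then have "((\<lambda>s. \<Phi> (v s) + s) has_real_derivative -1 + 1) (at x)"
        using d1 by (intro DERIV_add) auto
      then show "DERIV (\<lambda>s. \<Phi> (v s) + s) x :> 0" by simp
    qed
  qed
  have cPa: "isCont \<Phi> va" using dPhi[of va] d0 by (intro DERIV_isCont) auto
  have lim1: "((\<lambda>s. \<Phi> (v s) + s) \<longlongrightarrow> \<Phi> va + tc) (at_left tc)"
    by (intro tendsto_intros isCont_tendsto_compose[OF cPa lim_v])
  have ev: "eventually (\<lambda>s. \<Phi> (v t1) + t1 = \<Phi> (v s) + s) (at_left tc)"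
    using eventually_at_left_real[OF t1(2)]
  proof eventually_elim
    case (elim s)
    then have "t1 \<le> s" "s < tc" by auto
    then show ?case using const[of s] by linarith
  qed
  have lim2: "((\<lambda>s. \<Phi> (v s) + s) \<longlongrightarrow> \<Phi> (v t1) + t1) (at_left tc)"
    by (rule Lim_transform_eventually[OF tendsto_const ev])
  have c0: "\<Phi> (v t1) + t1 = tc"
    using tendsto_unique[OF trivial_limit_at_left_real lim2 lim1] Pa by simp
  have Phiv: "\<Phi> (v s) = tc - s" if "t1 \<le> s" "s < tc" for s using const[OF that] c0 by simp
  have Ib: "va - \<delta> \<le> va" "va \<le> va + \<delta>" using d0 by auto
  have rng: "tc - s \<in> {A<..<B}" if "t1 \<le> s" "s < tc + (- A)" for s
  proof -
    have "tc - s \<le> tc - t1" using that by simp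
    also have "tc - t1 = \<Phi> (v t1)" using Phiv[of t1] t1 by simp
    also have "\<dots> < \<Phi> (va + \<delta>)" using vin[of t1] t1 d0 by (intro mPhi) auto
    finally show ?thesis using PB that by auto
  qed
  have psiv: "\<psi> (tc - s) = v s" if s: "t1 \<le> s" "s < tc" for s
  proof -
    have r: "tc - s \<in> {A<..<B}" using rng[of s] s AB by auto
    have a1: "\<psi> (tc - s) \<in> {va-\<delta>..va+\<delta>}" using psi[OF r] by auto
    have a2: "v s \<in> {va-\<delta>..va+\<delta>}" using vin[OF s] d0 by auto
    have a3: "\<Phi> (\<psi> (tc - s)) = \<Phi> (v s)" using psi[OF r] Phiv[OF s] by simp
    show ?thesis by (rule injPhi[OF a1 a2 a3])
  qed
  define \<epsilon> where "\<epsilon> = - A"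
  have e0: "0 < \<epsilon>" using AB by (simp add: \<epsilon>_def)
  define v2 where "v2 t = (if t < tc then v t else \<psi> (tc - t))" for t
  define p2 where "p2 t = (if t < tc then p t else F C0 (\<psi> (tc - t)))" for t
  define T' where "T' = ereal (tc + \<epsilon>)"
  have tdT': "tdom T' = {0..<tc + \<epsilon>}" by (auto simp: T'_def tdom_def)
  have solext: "is_sol p2 v2 T'"
    unfolding is_sol_def
  proof (rule conjI[OF _ ballI])
    show "0 < T'" using tc_pos e0 by (simp add: T'_def)
  next
    fix t assume tT': "t \<in> tdom T'"
    show "v2 t \<noteq> 0 \<and>
        (p2 has_real_derivative p2 t * (p2 t * R (v2 t) - 1)) (at t within tdom T') \<and>
        (v2 has_real_derivative - (p2 t / 4) * (1 + (v2 t)\<^sup>2)) (at t within tdom T')"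
    proof (cases "t < tc")
      case True
      have tT: "t \<in> tdom T" using tT' True by (simp add: tdT' tdom_eq)
      have filt: "at t within tdom T' = at t within tdom T"
        by (rule at_within_nhd[of t "{..<tc}"]) (use True e0 in \<open>auto simp: tdT' tdom_eq\<close>)
      have near: "\<And>x. x \<in> tdom T' \<Longrightarrow> dist x t < tc - t \<Longrightarrow> x < tc"
        by (auto simp: dist_real_def)
      have dp: "(p2 has_real_derivative p t * (p t * R (v t) - 1)) (at t within tdom T')"
        by (rule has_field_derivative_transform_within[OF D(2)[OF tT, folded filt] _ tT'])
          (use True near in \<open>auto simp: p2_def\<close>)
      have dv: "(v2 has_real_derivative - (p t / 4) * (1 + (v t)\<^sup>2)) (at t within tdom T')"
        by (rule has_field_derivative_transform_within[OF D(3)[OF tT, folded filt] _ tT'])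
          (use True near in \<open>auto simp: v2_def\<close>)
      show ?thesis using dp dv D(1)[OF tT] True by (simp add: p2_def v2_def)
    next
      case False
      define J where "J = {t1<..<tc + \<epsilon>}"
      have tJ: "t \<in> J" using False tT' t1 by (auto simp: J_def tdT')
      have r: "tc - t \<in> {A<..<B}" using rng[of t] tJ by (auto simp: J_def \<epsilon>_def)
      note ps = psi[OF r]
      define w where "w = \<psi> (tc - t)"
      have w0: "0 < w" using ps by (auto simp: w_def \<delta>_def)
      have dm: "((\<lambda>x. tc - x) has_real_derivative -1) (at t)"
        by (auto intro!: derivative_eq_intros)
      have dv1: "((\<lambda>x. \<psi> (tc - x)) has_real_derivative g w * -1) (at t)"
        using DERIV_chain2[OF _ dm, of \<psi> "g w"] ps by (simp add: w_def)
      have dp1: "((\<lambda>x. F C0 (\<psi> (tc - x))) has_real_derivative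
          (-4 * (F C0 w * R w - 1) / (1 + w^2)) * (g w * -1)) (at t)"
      proof -
        have dF: "(F C0 has_real_derivative -4 * (F C0 w * R w - 1) / (1 + w^2)) (at (\<psi> (tc - t)))"
          using DERIV_F[of w C0] w0 by (simp add: w_def)
        show ?thesis using DERIV_chain2[OF dF dv1] .
      qed
      have eqv: "\<psi> (tc - x) = v2 x" if "x \<in> J" for x
        using psiv[of x] that by (auto simp: v2_def J_def)
      have eqp: "F C0 (\<psi> (tc - x)) = p2 x" if "x \<in> J" for x
        using psiv[of x] pF[OF sT, of x] that by (auto simp: p2_def J_def)
      have oJ: "open J" by (simp add: J_def)
      have dv2: "(v2 has_real_derivative g w * -1) (at t)"
        by (rule has_field_derivative_transform_within_open[OF dv1 oJ tJ eqv])
      have dp2: "(p2 has_real_derivative (-4 * (F C0 w * R w - 1) / (1 + w^2)) * (g w * -1)) (at t)"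
        by (rule has_field_derivative_transform_within_open[OF dp1 oJ tJ eqp])
      have v2t: "v2 t = w" and p2t: "p2 t = F C0 w" using False by (auto simp: v2_def p2_def w_def)
      have e1: "g w * -1 = - (p2 t / 4) * (1 + (v2 t)\<^sup>2)" by (simp add: g_def v2t p2t)
      have e2: "(-4 * (F C0 w * R w - 1) / (1 + w^2)) * (g w * -1) = p2 t * (p2 t * R (v2 t) - 1)"
        using pos1[of w] unfolding v2t p2t g_def by (simp add: field_simps)
      have dv2': "(v2 has_real_derivative - (p2 t / 4) * (1 + (v2 t)\<^sup>2)) (at t within tdom T')"
        by (rule has_field_derivative_at_within[OF DERIV_cong[OF dv2 e1]])
      have dp2': "(p2 has_real_derivative p2 t * (p2 t * R (v2 t) - 1)) (at t within tdom T')"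
        by (rule has_field_derivative_at_within[OF DERIV_cong[OF dp2 e2]])
      show ?thesis using dv2' dp2' w0 v2t by simp
    qed
  qed
  have agree: "\<forall>t\<in>tdom T. p2 t = p t \<and> v2 t = v t" by (auto simp: tdom_eq p2_def v2_def)
  have "T' \<le> T" using sol solext agree unfolding is_maximal_sol_def by blast
  then have "T' \<le> ereal tc" by (rule ord_le_eq_trans[OF _ T_eq])
  then show False using e0 by (simp add: T'_def)
qed

lemma va0: "va = 0" using va_nonneg va_pos_False by fastforce

lemma unbounded: "\<exists>t\<in>{0..<tc}. Z < p t"
proof (rule ccontr)
  assume "\<not> (\<exists>t\<in>{0..<tc}. Z < p t)"
  then have "\<And>t. t \<in> {0..<tc} \<Longrightarrow> p t \<le> Z" by (meson not_le)
  then show False using case0 va0 by blast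
qed

lemma plim: "filterlim p at_top (at_left tc)"
  unfolding filterlim_at_top
proof
  fix Z
  obtain t0 where t0: "t0 \<in> {0..<tc}" "Z < p t0" using unbounded by blast
  have "eventually (\<lambda>s. s \<in> {t0<..<tc}) (at_left tc)" using eventually_at_left_real[of t0 tc] t0 by auto
  then show "eventually (\<lambda>s. Z \<le> p s) (at_left tc)"
  proof eventually_elim
    case (elim s)
    then have "p t0 < p s" using mono_gen(1)[of t0 s] t0 by auto
    then show ?case using t0 by simp
  qed
qed

lemma ev_good: "eventually (\<lambda>s. 1 \<le> p s \<and> 0 < v s \<and> v s < 1 \<and> 0 < p s) (at_left tc)"
proof -
  have "eventually (\<lambda>s. 1 \<le> p s) (at_left tc)" using plim by (simp add: filterlim_at_top)
  moreover have "eventually (\<lambda>s. s \<in> {0<..<tc}) (at_left tc)" using eventually_at_left_real[OF tc_pos] .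
  ultimately show ?thesis
  proof eventually_elim
    case (elim s)
    then have sT1: "s \<in> tdom T" using tdom_eq by simp
    have sT: "s \<in> tdom T" "0 < s" "ereal s < T" using sT1 elim tdom_iff[of s T] by auto
    have "v s < v 0" using part1[OF sT(2,3)] by simp
    then show ?case using elim pos[OF sT(1)] v0 by simp
  qed
qed

lemma N2lim: "filterlim (\<lambda>t. N2sq (p t) (v t)) at_top (at_left tc)"
proof (rule filterlim_at_top_mono[OF plim])
  show "eventually (\<lambda>s. p s \<le> N2sq (p s) (v s)) (at_left tc)"
    using ev_good
  proof eventually_elim
    case (elim s)
    have "1 < 1 / v s" using elim by simp
    then have a: "1 \<le> 1 / v s + v s" using elim by linarith
    have "p s \<le> p s * p s" using elim by simp
    also have "\<dots> = 1 * (p s)^2" by (simp add: power2_eq_square)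
    also have "\<dots> \<le> (2 * pi) * (p s)^2" using pi_gt3 by (intro mult_right_mono) auto
    also have "\<dots> = 2 * pi * (p s)^2 * 1" by simp
    also have "\<dots> \<le> 2 * pi * (p s)^2 * (1 / v s + v s)" using a pi_gt_zero by (intro mult_left_mono) auto
    finally show ?case by (simp add: N2sq_def)
  qed
qed

lemma N0lim: "filterlim (\<lambda>t. N0 (p t) (v t)) at_top (at_left tc)"
proof (rule filterlim_at_top_mono[OF plim])
  show "eventually (\<lambda>s. p s \<le> N0 (p s) (v s)) (at_left tc)"
    using ev_good
  proof eventually_elim
    case (elim s)
    have "1 < 1 / v s" using elim by simp
    then have "1 \<le> max (1 / v s) (v s)" by simp
    then have "p s * 1 \<le> p s * max (1 / v s) (v s)" using elim by (intro mult_left_mono) auto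
    then show ?case using elim by (simp add: N0_def)
  qed
qed

end

theorem theoremA2:
  fixes p v :: "real \<Rightarrow> real" and T :: ereal and \<rho> :: real
  assumes sol: "is_maximal_sol p v T"
    and v0: "0 < v 0" "v 0 < 1"
    and rho: "0 < \<rho>" "\<rho> < R (v 0)"
    and p0: "p 0 > 1 / (R (v 0) - \<rho>)"
  shows "(\<forall>t. 0 < t \<and> ereal t < T \<longrightarrow>
            v t < v 0 \<and> p t > 1 / (R (v t) - \<rho>) \<and>
            p t \<ge> p 0 / (1 - \<rho> * p 0 * t))
       \<and> (\<exists>tc. T = ereal tc \<and> tc \<le> 1 / (\<rho> * p 0) \<and>
            filterlim p at_top (at_left tc) \<and>
            filterlim (\<lambda>t. N2sq (p t) (v t)) at_top (at_left tc) \<and>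
            filterlim (\<lambda>t. N0 (p t) (v t)) at_top (at_left tc))"
proof -
  interpret S: sys p v T \<rho> using assms by unfold_locales
  show ?thesis
    using S.part1 S.T_eq S.tc_le S.plim S.N2lim S.N0lim by blast
qed

end
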